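(* Let $M=\frac32-\sqrt2$. For real $f_2,f_3,y_2,y_3$ put $\hat A=1+(1-f_2)(1-y_2)+2(1-f_3)(1-y_3)$ and $\hat F_1=1/\hat A$, and define $$\hat\alpha(f_2,f_3,y_2,y_3)=\frac{1}{(\frac12-\hat F_1)\hat A}\Bigl((1-f_2)\,y_2(\tfrac12-y_2)+2Mf_2(1-\hat A)+2(1-f_3)\,y_3(\tfrac12-y_3)+4Mf_2(1-y_3)\Bigr).$$ Then for all $f_2,f_3,y_2,y_3\in[0,\frac12]$ satisfying $f_2+2f_3=1$, $\frac1{13}\le f_2\le\frac12$ and $0\le y_2,y_3\le\frac{6}{13}$, we have $\hat\alpha(f_2,f_3,y_2,y_3)\le\frac{9231}{10000}$.
   Context: In the paper's notation, with $\Phi(x)=\frac{1}{x(\frac12-x)}$, one has $y(\frac12-y)=1/\Phi(y)$ and $\frac{1}{(\frac12-\hat F_1)\hat A}=\frac{\Phi(\hat F_1)\hat F_1}{\hat A}$. Under the hypotheses $\hat A>2$, so $\hat\alpha$ is well defined. *)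

theory Defs
  imports Complex_Main
begin

definition M_const :: real where
  "M_const = 3/2 - sqrt 2"

definition A_hat :: "real \<Rightarrow> real \<Rightarrow> real \<Rightarrow> real \<Rightarrow> real" where
  "A_hat f2 f3 y2 y3 = 1 + (1 - f2) * (1 - y2) + 2 * (1 - f3) * (1 - y3)"

definition F1_hat :: "real \<Rightarrow> real \<Rightarrow> real \<Rightarrow> real \<Rightarrow> real" where
  "F1_hat f2 f3 y2 y3 = 1 / A_hat f2 f3 y2 y3"

definition alpha_hat :: "real \<Rightarrow> real \<Rightarrow> real \<Rightarrow> real \<Rightarrow> real" where
  "alpha_hat f2 f3 y2 y3 =
     (1 / ((1/2 - F1_hat f2 f3 y2 y3) * A_hat f2 f3 y2 y3)) *
     ((1 - f2) * y2 * (1/2 - y2) + 2 * M_const * f2 * (1 - A_hat f2 f3 y2 y3)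
      + 2 * (1 - f3) * y3 * (1/2 - y3) + 4 * M_const * f2 * (1 - y3))"

end

theory Submission
  imports Defs
begin

lemma M_bounds: "0 \<le> M_const" "M_const \<le> 858/10000"
proof -
  have "sqrt 2 \<le> sqrt (9/4)" by simp
  moreover have "sqrt (9/4) = 3/(2::real)"
    by (simp add: real_sqrt_divide)
  ultimately show "0 \<le> M_const" unfolding M_const_def by simp
  have "sqrt ((14142/10000)^2) \<le> sqrt 2" by (subst real_sqrt_le_iff) (simp add: power2_eq_square)
  hence "14142/10000 \<le> sqrt 2" by simp
  thus "M_const \<le> 858/10000" unfolding M_const_def by simp
qed

theorem lemma24:
  fixes f2 f3 y2 y3 :: real
  assumes "f2 \<in> {0..1/2}" and "f3 \<in> {0..1/2}" and "y2 \<in> {0..1/2}" and "y3 \<in> {0..1/2}"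
    and "f2 + 2 * f3 = 1"
    and "1/13 \<le> f2" and "f2 \<le> 1/2"
    and "0 \<le> y2" and "y2 \<le> 6/13" and "0 \<le> y3" and "y3 \<le> 6/13"
  shows "alpha_hat f2 f3 y2 y3 \<le> 9231/10000"
proof -
  define M where "M = M_const"
  have M0: "0 \<le> M" and M1: "M \<le> 858/10000" using M_bounds M_def by auto
  define A where "A = A_hat f2 f3 y2 y3"
  define a where "a = 1 - f2"
  define b where "b = 1 + f2"
  define u where "u = 6/13 - y2"
  define v where "v = 6/13 - y3"
  define c :: real where "c = 9231/10000"
  define k :: real where "k = 1/2 + c/2"
  have f3: "f3 = (1 - f2)/2" using assms(5) by simp
  have Aeq: "A = 1 + a*(1-y2) + b*(1-y3)" unfolding A_def A_hat_def a_def b_def f3 by (simp add: field_simps)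
  have u0: "0 \<le> u" and v0: "0 \<le> v" using assms u_def v_def by auto
  have a0: "0 \<le> a" and b1: "1 \<le> b" using assms a_def b_def by auto
  have A2: "A/2 - 1 > 0"
  proof -
    have "a*(1-y2) \<ge> a*(7/13)" using a0 assms by (intro mult_left_mono) auto
    moreover have "b*(1-y3) \<ge> b*(7/13)" using b1 assms by (intro mult_left_mono) auto
    ultimately show ?thesis using Aeq a_def b_def by simp
  qed
  have Ane: "A \<noteq> 0" using A2 by auto
  have alpha: "alpha_hat f2 f3 y2 y3 =
     ((1 - f2) * y2 * (1/2 - y2) + 2 * M * f2 * (1 - A)
      + 2 * (1 - f3) * y3 * (1/2 - y3) + 4 * M * f2 * (1 - y3)) / (A/2 - 1)"
  proof -
    have "(1/2 - 1/A)*A = A/2 - 1" using Ane by (simp add: field_simps)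
    thus ?thesis unfolding alpha_hat_def F1_hat_def A_def[symmetric] M_def[symmetric] by simp
  qed
  have num: "(1 - f2) * y2 * (1/2 - y2) + 2 * M * f2 * (1 - A)
      + 2 * (1 - f3) * y3 * (1/2 - y3) + 4 * M * f2 * (1 - y3)
      = a*y2*(1/2-y2) + b*y3*(1/2-y3) + 2*M*f2*a*(y2-y3)"
    unfolding Aeq f3 a_def b_def by (simp add: field_simps)
  have den: "A/2 - 1 = (1 - a*y2 - b*y3)/2" unfolding Aeq a_def b_def by (simp add: field_simps)
  have decomp: "c*(1 - a*y2 - b*y3)/2 - (a*y2*(1/2-y2) + b*y3*(1/2-y3) + 2*M*f2*a*(y2-y3))
     = (c/2 - 2*(6/13)*(k-6/13)) + a*u*(k-12/13+u) + 2*M*f2*a*u + v*(b*(k-12/13+v) - 2*M*f2*a)"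
    unfolding u_def v_def k_def a_def b_def c_def by (simp add: field_simps)
  have t1: "c/2 - 2*(6/13)*(k-6/13) \<ge> 0" unfolding c_def k_def by simp
  have kk: "k - 12/13 \<ge> 0" unfolding k_def c_def by simp
  have t2: "a*u*(k-12/13+u) \<ge> 0" using a0 u0 kk by simp
  have t3: "2*M*f2*a*u \<ge> 0" using M0 a0 u0 assms by simp
  have q: "2*M*f2*a \<le> b*(k-12/13)"
  proof -
    have "2*M*(f2*a) \<le> 2*(858/10000)*(f2*a)"
      using M0 M1 a0 assms by (intro mult_right_mono) auto
    moreover have "2*(858/10000)*(f2*a) \<le> b*(k-12/13)"
    proof -
      have "0 \<le> (f2 - 86532500/223080000)*(f2 - 86532500/223080000)" by simp
      thus ?thesis unfolding a_def b_def k_def c_def by (simp add: algebra_simps)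
    qed
    ultimately show ?thesis by (simp add: mult.assoc algebra_simps)
  qed
  have t4: "v*(b*(k-12/13+v) - 2*M*f2*a) \<ge> 0"
  proof -
    have "b*v \<ge> 0" using b1 v0 by simp
    hence "b*(k-12/13+v) - 2*M*f2*a \<ge> 0" using q by (simp add: algebra_simps)
    thus ?thesis using v0 by simp
  qed
  have key: "a*y2*(1/2-y2) + b*y3*(1/2-y3) + 2*M*f2*a*(y2-y3) \<le> c*((1 - a*y2 - b*y3)/2)"
    using decomp t1 t2 t3 t4 by linarith
  show ?thesis
    unfolding alpha num using A2 key unfolding den c_def
    by (simp add: divide_le_eq)
qed

end
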